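(* Let $\mathbf{Q}=(Q,Z,\cdot)$ be a finite automaton, $q\in Q$, $u\in Z^*$, and $\mathcal{C}$ a Conway category. If the identity $\Gamma(\mathbf{Q},q)$ holds in $\mathcal{C}$, then so does $\Gamma(\mathbf{Q},qu)$. Consequently, if $(\mathbf{Q},q)$ is initially connected, then $\Gamma(\mathbf{Q})$ holds in $\mathcal{C}$ if and only if $\Gamma(\mathbf{Q},q)$ holds in $\mathcal{C}$.
   Context: Cartesian categories have chosen finite products (terminal object $T$, projections $\pi_i$, tupling $\langle\cdot\rangle$, $!_A:A\to T$, $f\times g$), strictly associative; composition is written $g\circ f$; $\Delta_{A^n}=\langle 1_A,\ldots,1_A\rangle:A\to A^n$. A dagger operation maps $f:A\times C\to A$ to $f^\dagger:C\to A$. A Conway category is a cartesian category with dagger satisfying: $(f\circ(1_A\times g))^\dagger=f^\dagger\circ g$ ($f:A\times B\to A$, $g:C\to B$); $f^{\dagger\dagger}=(f\circ(\Delta_{A^2}\times 1_C))^\dagger$ ($f:A\times A\times C\to A$); $(f\circ\langle g,\pi_2^{A\times C}\rangle)^\dagger=f\circ\langle (g\circ\langle f,\pi_2^{B\times C}\rangle)^\dagger,1_C\rangle$ ($f:B\times C\to A$, $g:A\times C\to B$). A finite automaton $\mathbf{Q}=(Q,Z,\cdot)$ has finite nonempty state set $Q$, finite nonempty input alphabet $Z$ and action $Q\times Z\to Q$, extended to words $u\in Z^*$, written $qu$. Write $Q=\{q_1,\ldots,q_n\}$, identified with $\{1,\ldots,n\}$, and $Z=\{a_1,\ldots,a_m\}$.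 For an object $A$ and $i\in[n]$ let $\rho_i^{\mathbf{Q},A}=\langle\pi^{A^n}_{ia_1},\ldots,\pi^{A^n}_{ia_m}\rangle:A^n\to A^m$ ($ia_j$ is the index of $q_i\cdot a_j$). For $f:A^m\times C\to A$ let $f^{\mathbf{Q},A}:A^n\times C\to A^n$ have components $\pi_i^{A^n}\circ f^{\mathbf{Q},A}=f\circ(\rho_i^{\mathbf{Q},A}\times 1_C)$. The identity $\Gamma(\mathbf{Q})$ holds in $\mathcal{C}$ if $(f^{\mathbf{Q},A})^\dagger=\Delta_{A^n}\circ(f\circ(\Delta_{A^m}\times 1_C))^\dagger$ for all objects $A,C$ and all $f:A^m\times C\to A$; for a state $q_i$, $\Gamma(\mathbf{Q},q_i)$ holds if $\pi_i^{A^n}\circ(f^{\mathbf{Q},A})^\dagger=(f\circ(\Delta_{A^m}\times 1_C))^\dagger$ for all such $A,C,f$. $(\mathbf{Q},q)$ is initially connected if every state of $\mathbf{Q}$ equals $qu$ for some word $u\in Z^*$. *)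

theory Defs
  imports Main
begin

text \<open>Objects are the elements of type 'o, arrows the elements of
type 'm; every arrow f has a domain dm f and codomain cd f.
cmp X g f is the composite g o f (meaningful when cd f = dm g).
prd X A B is the chosen product A x B with projections pr1 X A B, pr2 X A B;
pair X f g is the tupling of f and g.  dag X A C f is the dagger of
f : A x C -> A.\<close>

record ('o, 'm) cstruct =
  dm   :: "'m \<Rightarrow> 'o"
  cd   :: "'m \<Rightarrow> 'o"
  cmp  :: "'m \<Rightarrow> 'm \<Rightarrow> 'm"
  idm  :: "'o \<Rightarrow> 'm"
  trm  :: "'o"
  bang :: "'o \<Rightarrow> 'm"
  prd  :: "'o \<Rightarrow> 'o \<Rightarrow> 'o"
  pr1  :: "'o \<Rightarrow> 'o \<Rightarrow> 'm"
  pr2  :: "'o \<Rightarrow> 'o \<Rightarrow> 'm"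
  pair :: "'m \<Rightarrow> 'm \<Rightarrow> 'm"
  dag  :: "'o \<Rightarrow> 'o \<Rightarrow> 'm \<Rightarrow> 'm"

definition hom :: "('o, 'm) cstruct \<Rightarrow> 'o \<Rightarrow> 'o \<Rightarrow> 'm set" where
  "hom X A B = {f. dm X f = A \<and> cd X f = B}"

text \<open>Cartesian category with chosen finite products (terminal object plus binary
products), strictly associative: (A x B) x C = A x (B x C) and the canonical
associativity morphism is the identity.\<close>
definition cartesian :: "('o, 'm) cstruct \<Rightarrow> bool" where
  "cartesian X \<longleftrightarrow>
    (\<forall>f g. cd X f = dm X g \<longrightarrow> dm X (cmp X g f) = dm X f \<and> cd X (cmp X g f) = cd X g) \<and>
    (\<forall>f g h. cd X f = dm X g \<longrightarrow> cd X g = dm X h \<longrightarrow>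
        cmp X h (cmp X g f) = cmp X (cmp X h g) f) \<and>
    (\<forall>A. idm X A \<in> hom X A A) \<and>
    (\<forall>f. cmp X (idm X (cd X f)) f = f \<and> cmp X f (idm X (dm X f)) = f) \<and>
    (\<forall>A. bang X A \<in> hom X A (trm X)) \<and>
    (\<forall>A f. f \<in> hom X A (trm X) \<longrightarrow> f = bang X A) \<and>
    (\<forall>A B. pr1 X A B \<in> hom X (prd X A B) A \<and> pr2 X A B \<in> hom X (prd X A B) B) \<and>
    (\<forall>D A B f g. f \<in> hom X D A \<longrightarrow> g \<in> hom X D B \<longrightarrow>
        pair X f g \<in> hom X D (prd X A B) \<and>
        cmp X (pr1 X A B) (pair X f g) = f \<and> cmp X (pr2 X A B) (pair X f g) = g) \<and>
    (\<forall>D A B h. h \<in> hom X D (prd X A B) \<longrightarrow>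
        pair X (cmp X (pr1 X A B) h) (cmp X (pr2 X A B) h) = h) \<and>
    (\<forall>A B C. prd X (prd X A B) C = prd X A (prd X B C) \<and>
        pair X (cmp X (pr1 X A B) (pr1 X (prd X A B) C))
               (pair X (cmp X (pr2 X A B) (pr1 X (prd X A B) C)) (pr2 X (prd X A B) C))
          = idm X (prd X (prd X A B) C))"

fun pw :: "('o, 'm) cstruct \<Rightarrow> 'o \<Rightarrow> nat \<Rightarrow> 'o" where
  "pw X A 0 = trm X"
| "pw X A (Suc 0) = A"
| "pw X A (Suc (Suc n)) = prd X A (pw X A (Suc n))"

text \<open>Projections pi_i of A^n, for 1 \<le> i \<le> n.\<close>
fun prj :: "('o, 'm) cstruct \<Rightarrow> 'o \<Rightarrow> nat \<Rightarrow> nat \<Rightarrow> 'm" where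
  "prj X A 0 i = undefined"
| "prj X A (Suc 0) i = idm X A"
| "prj X A (Suc (Suc n)) i =
     (if i \<le> 1 then pr1 X A (pw X A (Suc n))
      else cmp X (prj X A (Suc n) (i - 1)) (pr2 X A (pw X A (Suc n))))"

fun tup :: "('o, 'm) cstruct \<Rightarrow> 'o \<Rightarrow> 'm list \<Rightarrow> 'm" where
  "tup X D [] = bang X D"
| "tup X D [f] = f"
| "tup X D (f # g # fs) = pair X f (tup X D (g # fs))"

definition diag :: "('o, 'm) cstruct \<Rightarrow> 'o \<Rightarrow> nat \<Rightarrow> 'm" where
  "diag X A n = tup X A (replicate n (idm X A))"

definition cross :: "('o, 'm) cstruct \<Rightarrow> 'm \<Rightarrow> 'm \<Rightarrow> 'm" where
  "cross X f g = pair X (cmp X f (pr1 X (dm X f) (dm X g))) (cmp X g (pr2 X (dm X f) (dm X g)))"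

definition conway :: "('o, 'm) cstruct \<Rightarrow> bool" where
  "conway X \<longleftrightarrow> cartesian X \<and>
    (\<forall>A C f. f \<in> hom X (prd X A C) A \<longrightarrow> dag X A C f \<in> hom X C A) \<and>
    (\<forall>A B C f g. f \<in> hom X (prd X A B) A \<longrightarrow> g \<in> hom X C B \<longrightarrow>
        dag X A C (cmp X f (cross X (idm X A) g)) = cmp X (dag X A B f) g) \<and>
    (\<forall>A C f. f \<in> hom X (prd X A (prd X A C)) A \<longrightarrow>
        dag X A C (dag X A (prd X A C) f) = dag X A C (cmp X f (cross X (diag X A 2) (idm X C)))) \<and>
    (\<forall>A B C f g. f \<in> hom X (prd X B C) A \<longrightarrow> g \<in> hom X (prd X A C) B \<longrightarrow>
        dag X A C (cmp X f (pair X g (pr2 X A C))) =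
        cmp X f (pair X (dag X B C (cmp X g (pair X f (pr2 X B C)))) (idm X C)))"

definition automaton :: "nat \<Rightarrow> nat \<Rightarrow> (nat \<Rightarrow> nat \<Rightarrow> nat) \<Rightarrow> bool" where
  "automaton n m \<delta> \<longleftrightarrow> 1 \<le> n \<and> 1 \<le> m \<and> (\<forall>i\<in>{1..n}. \<forall>j\<in>{1..m}. \<delta> i j \<in> {1..n})"

definition run :: "(nat \<Rightarrow> nat \<Rightarrow> nat) \<Rightarrow> nat \<Rightarrow> nat list \<Rightarrow> nat" where
  "run \<delta> q u = foldl \<delta> q u"

definition initially_connected :: "nat \<Rightarrow> nat \<Rightarrow> (nat \<Rightarrow> nat \<Rightarrow> nat) \<Rightarrow> nat \<Rightarrow> bool" where
  "initially_connected n m \<delta> q \<longleftrightarrow> (\<forall>p\<in>{1..n}. \<exists>u\<in>lists {1..m}. run \<delta> q u = p)"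

definition rho :: "('o, 'm) cstruct \<Rightarrow> nat \<Rightarrow> nat \<Rightarrow> (nat \<Rightarrow> nat \<Rightarrow> nat) \<Rightarrow> 'o \<Rightarrow> nat \<Rightarrow> 'm" where
  "rho X n m \<delta> A i = tup X (pw X A n) (map (\<lambda>j. prj X A n (\<delta> i j)) [1..<m+1])"

definition fQ :: "('o, 'm) cstruct \<Rightarrow> nat \<Rightarrow> nat \<Rightarrow> (nat \<Rightarrow> nat \<Rightarrow> nat) \<Rightarrow> 'o \<Rightarrow> 'o \<Rightarrow> 'm \<Rightarrow> 'm" where
  "fQ X n m \<delta> A C f = tup X (prd X (pw X A n) C)
     (map (\<lambda>i. cmp X f (cross X (rho X n m \<delta> A i) (idm X C))) [1..<n+1])"

definition Gamma :: "('o, 'm) cstruct \<Rightarrow> nat \<Rightarrow> nat \<Rightarrow> (nat \<Rightarrow> nat \<Rightarrow> nat) \<Rightarrow> bool" where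
  "Gamma X n m \<delta> \<longleftrightarrow> (\<forall>A C f. f \<in> hom X (prd X (pw X A m) C) A \<longrightarrow>
     dag X (pw X A n) C (fQ X n m \<delta> A C f) =
     cmp X (diag X A n) (dag X A C (cmp X f (cross X (diag X A m) (idm X C)))))"

definition Gamma_at :: "('o, 'm) cstruct \<Rightarrow> nat \<Rightarrow> nat \<Rightarrow> (nat \<Rightarrow> nat \<Rightarrow> nat) \<Rightarrow> nat \<Rightarrow> bool" where
  "Gamma_at X n m \<delta> i \<longleftrightarrow> (\<forall>A C f. f \<in> hom X (prd X (pw X A m) C) A \<longrightarrow>
     cmp X (prj X A n i) (dag X (pw X A n) C (fQ X n m \<delta> A C f)) =
     dag X A C (cmp X f (cross X (diag X A m) (idm X C))))"

end

theory Submission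
  imports Defs
begin


locale cc = fixes X :: "('o,'m) cstruct" assumes cw: "conway X"
begin

lemma cart: "cartesian X" using cw by (simp add: conway_def)

lemmas CC = cart[unfolded cartesian_def]
lemmas c1 = CC[THEN conjunct1]
lemmas c2 = CC[THEN conjunct2, THEN conjunct1]
lemmas c3 = CC[THEN conjunct2, THEN conjunct2, THEN conjunct1]
lemmas c4 = CC[THEN conjunct2, THEN conjunct2, THEN conjunct2, THEN conjunct1]
lemmas c5 = CC[THEN conjunct2, THEN conjunct2, THEN conjunct2, THEN conjunct2, THEN conjunct1]
lemmas c6 = CC[THEN conjunct2, THEN conjunct2, THEN conjunct2, THEN conjunct2, THEN conjunct2, THEN conjunct1]
lemmas c7 = CC[THEN conjunct2, THEN conjunct2, THEN conjunct2, THEN conjunct2, THEN conjunct2, THEN conjunct2, THEN conjunct1]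
lemmas c8 = CC[THEN conjunct2, THEN conjunct2, THEN conjunct2, THEN conjunct2, THEN conjunct2, THEN conjunct2, THEN conjunct2, THEN conjunct1]
lemmas c9 = CC[THEN conjunct2, THEN conjunct2, THEN conjunct2, THEN conjunct2, THEN conjunct2, THEN conjunct2, THEN conjunct2, THEN conjunct2, THEN conjunct1]

lemma dm_cmp[simp]: "cd X f = dm X g \<Longrightarrow> dm X (cmp X g f) = dm X f"
  using c1 by blast
lemma cd_cmp[simp]: "cd X f = dm X g \<Longrightarrow> cd X (cmp X g f) = cd X g"
  using c1 by blast
lemma assoc[simp]: "cd X f = dm X g \<Longrightarrow> cd X g = dm X h \<Longrightarrow> cmp X (cmp X h g) f = cmp X h (cmp X g f)"
  using c2 by metis
lemma dm_id[simp]: "dm X (idm X A) = A" and cd_id[simp]: "cd X (idm X A) = A"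
  using c3 unfolding hom_def by auto
lemma id_l[simp]: "cd X f = B \<Longrightarrow> cmp X (idm X B) f = f"
  using c4 by blast
lemma id_r[simp]: "dm X f = A \<Longrightarrow> cmp X f (idm X A) = f"
  using c4 by blast
lemma dm_bang[simp]: "dm X (bang X A) = A" and cd_bang[simp]: "cd X (bang X A) = trm X"
  using c5 unfolding hom_def by auto
lemma bang_uniq: "dm X f = A \<Longrightarrow> cd X f = trm X \<Longrightarrow> f = bang X A"
  using c6 unfolding hom_def by auto
lemma dm_pr1[simp]: "dm X (pr1 X A B) = prd X A B" and cd_pr1[simp]: "cd X (pr1 X A B) = A"
  and dm_pr2[simp]: "dm X (pr2 X A B) = prd X A B" and cd_pr2[simp]: "cd X (pr2 X A B) = B"
  using c7 unfolding hom_def by auto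

lemma pair_ax: "dm X f = dm X g \<Longrightarrow> dm X (pair X f g) = dm X f \<and> cd X (pair X f g) = prd X (cd X f) (cd X g)
   \<and> cmp X (pr1 X (cd X f) (cd X g)) (pair X f g) = f \<and> cmp X (pr2 X (cd X f) (cd X g)) (pair X f g) = g"
proof -
  assume "dm X f = dm X g"
  then have "f \<in> hom X (dm X f) (cd X f)" "g \<in> hom X (dm X f) (cd X g)" by (auto simp: hom_def)
  then show ?thesis using c8 unfolding hom_def by blast
qed

lemma dm_pair[simp]: "dm X f = dm X g \<Longrightarrow> dm X (pair X f g) = dm X f" using pair_ax by blast
lemma cd_pair[simp]: "dm X f = dm X g \<Longrightarrow> cd X (pair X f g) = prd X (cd X f) (cd X g)" using pair_ax by blast
lemma beta1[simp]: "dm X f = dm X g \<Longrightarrow> cd X f = A \<Longrightarrow> cd X g = B \<Longrightarrow> cmp X (pr1 X A B) (pair X f g) = f" using pair_ax by blast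
lemma beta2[simp]: "dm X f = dm X g \<Longrightarrow> cd X f = A \<Longrightarrow> cd X g = B \<Longrightarrow> cmp X (pr2 X A B) (pair X f g) = g" using pair_ax by blast
lemma eta: "cd X h = prd X A B \<Longrightarrow> pair X (cmp X (pr1 X A B) h) (cmp X (pr2 X A B) h) = h"
proof -
  assume "cd X h = prd X A B"
  then have "h \<in> hom X (dm X h) (prd X A B)" by (simp add: hom_def)
  then show ?thesis using c9 by blast
qed

lemma pair_ext: "cd X h = prd X A B \<Longrightarrow> cd X k = prd X A B \<Longrightarrow>
  cmp X (pr1 X A B) h = cmp X (pr1 X A B) k \<Longrightarrow> cmp X (pr2 X A B) h = cmp X (pr2 X A B) k \<Longrightarrow> h = k"
  by (metis eta)

lemma pair_comp[simp]: "dm X f = dm X g \<Longrightarrow> cd X k = dm X f \<Longrightarrow>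
   cmp X (pair X f g) k = pair X (cmp X f k) (cmp X g k)"
  apply (rule pair_ext[where A="cd X f" and B = "cd X g"])
  apply (simp_all del: assoc add: assoc[symmetric])
  done

lemma cross_def2: "cross X f g = pair X (cmp X f (pr1 X (dm X f) (dm X g))) (cmp X g (pr2 X (dm X f) (dm X g)))"
  by (simp add: cross_def)
lemma dm_cross[simp]: "dm X (cross X f g) = prd X (dm X f) (dm X g)"
  and cd_cross[simp]: "cd X (cross X f g) = prd X (cd X f) (cd X g)"
  by (simp_all add: cross_def)
lemma cross_pair[simp]: "dm X a = dm X b \<Longrightarrow> cd X a = dm X f \<Longrightarrow> cd X b = dm X g \<Longrightarrow>
   cmp X (cross X f g) (pair X a b) = pair X (cmp X f a) (cmp X g b)"
  by (simp add: cross_def)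

lemma dag_ax: "dm X f = prd X A C \<Longrightarrow> cd X f = A \<Longrightarrow> dm X (dag X A C f) = C \<and> cd X (dag X A C f) = A"
  using cw unfolding conway_def hom_def by blast
lemma dm_dag[simp]: "dm X f = prd X A C \<Longrightarrow> cd X f = A \<Longrightarrow> dm X (dag X A C f) = C" using dag_ax by blast
lemma cd_dag[simp]: "dm X f = prd X A C \<Longrightarrow> cd X f = A \<Longrightarrow> cd X (dag X A C f) = A" using dag_ax by blast

lemma comp_dag: "dm X f = prd X B C \<Longrightarrow> cd X f = A \<Longrightarrow> dm X g = prd X A C \<Longrightarrow> cd X g = B \<Longrightarrow>
  dag X A C (cmp X f (pair X g (pr2 X A C))) =
        cmp X f (pair X (dag X B C (cmp X g (pair X f (pr2 X B C)))) (idm X C))"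
  using cw unfolding conway_def hom_def by blast

lemma fixp: "dm X f = prd X A C \<Longrightarrow> cd X f = A \<Longrightarrow> dag X A C f = cmp X f (pair X (dag X A C f) (idm X C))"
proof -
  assume a: "dm X f = prd X A C" "cd X f = A"
  have e: "pair X (pr1 X A C) (pr2 X A C) = idm X (prd X A C)"
    using eta[of "idm X (prd X A C)" A C] by simp
  have "dag X A C (cmp X f (pair X (pr1 X A C) (pr2 X A C))) =
     cmp X f (pair X (dag X A C (cmp X (pr1 X A C) (pair X f (pr2 X A C)))) (idm X C))"
    using comp_dag[of f A C A "pr1 X A C"] a by simp
  then show ?thesis using a e by simp
qed


lemma prj_ty: "1 \<le> i \<Longrightarrow> i \<le> n \<Longrightarrow> dm X (prj X A n i) = pw X A n \<and> cd X (prj X A n i) = A"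
proof (induction n arbitrary: i rule: less_induct)
  case (less n)
  show ?case
  proof (cases n)
    case 0 thus ?thesis using less by auto
  next
    case (Suc k)
    show ?thesis
    proof (cases k)
      case 0 thus ?thesis using Suc by auto
    next
      case (Suc k')
      have "i \<le> 1 \<or> (1 \<le> i - 1 \<and> i - 1 \<le> Suc k')" using less \<open>n = Suc k\<close> Suc by auto
      moreover have "1 \<le> i - 1 \<Longrightarrow> i - 1 \<le> Suc k' \<Longrightarrow> dm X (prj X A (Suc k') (i-1)) = pw X A (Suc k') \<and> cd X (prj X A (Suc k') (i-1)) = A"
        using less.IH[of "Suc k'" "i - 1"] \<open>n = Suc k\<close> Suc by auto
      ultimately show ?thesis using \<open>n = Suc k\<close> Suc by auto
    qed
  qed
qed
lemma dm_prj[simp]: "1 \<le> i \<Longrightarrow> i \<le> n \<Longrightarrow> dm X (prj X A n i) = pw X A n" using prj_ty by blast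
lemma cd_prj[simp]: "1 \<le> i \<Longrightarrow> i \<le> n \<Longrightarrow> cd X (prj X A n i) = A" using prj_ty by blast

lemma tup_cons2: "tup X D (f # g # fs) = pair X f (tup X D (g # fs))" by simp

lemma dm_tup[simp]: "\<forall>f\<in>set fs. dm X f = D \<Longrightarrow> dm X (tup X D fs) = D"
proof (induction fs)
  case (Cons f fs) thus ?case by (cases fs) auto
qed simp

lemma cd_tup[simp]: "\<forall>f\<in>set fs. dm X f = D \<and> cd X f = A \<Longrightarrow> length fs = n \<Longrightarrow> cd X (tup X D fs) = pw X A n"
proof (induction fs arbitrary: n)
  case (Cons f fs) thus ?case by (cases fs) auto
qed simp

lemma prj_tup[simp]: "\<forall>f\<in>set fs. dm X f = D \<and> cd X f = A \<Longrightarrow> length fs = n \<Longrightarrow> 1 \<le> i \<Longrightarrow> i \<le> n \<Longrightarrow>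
   cmp X (prj X A n i) (tup X D fs) = fs ! (i - 1)"
proof (induction fs arbitrary: n i)
  case Nil thus ?case by simp
next
  case (Cons f fs)
  show ?case
  proof (cases fs)
    case Nil thus ?thesis using Cons by auto
  next
    case (Cons g gs)
    note fs = this
    show ?thesis
    proof (cases "i \<le> 1")
      case True thus ?thesis using Cons.prems fs by auto
    next
      case False
      have n: "n = Suc (Suc (length gs))" using Cons.prems fs by simp
      have fD: "dm X f = D" "cd X f = A" using Cons.prems by auto
      have ct: "cd X (tup X D fs) = pw X A (Suc (length gs))"
        by (rule cd_tup) (use Cons.prems fs in auto)
      have dt: "dm X (tup X D fs) = D"
        by (rule dm_tup) (use Cons.prems fs in auto)
      have b2: "cmp X (pr2 X A (pw X A (Suc (length gs)))) (pair X f (tup X D fs)) = tup X D fs"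
        using ct dt Cons.prems by (intro beta2) auto
      have "cmp X (prj X A n i) (tup X D (f # fs)) =
         cmp X (cmp X (prj X A (Suc (length gs)) (i - 1)) (pr2 X A (pw X A (Suc (length gs))))) (pair X f (tup X D fs))"
        using fs False n by simp
      also have "\<dots> = cmp X (prj X A (Suc (length gs)) (i - 1)) (tup X D fs)"
        using False n ct dt b2 fD \<open>i \<le> n\<close> by (subst assoc) simp_all
      also have "\<dots> = fs ! (i - 1 - 1)" using Cons.prems fs False n by (intro Cons.IH) auto
      finally show ?thesis using False by (cases i) auto
    qed
  qed
qed


lemma pw_ext: "dm X k = dm X k' \<Longrightarrow> cd X k = pw X A n \<Longrightarrow> cd X k' = pw X A n \<Longrightarrow>
  (\<And>i. 1 \<le> i \<Longrightarrow> i \<le> n \<Longrightarrow> cmp X (prj X A n i) k = cmp X (prj X A n i) k') \<Longrightarrow> k = k'"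
proof (induction n arbitrary: k k' rule: less_induct)
  case (less n)
  show ?case
  proof (cases n)
    case 0
    then have "k = bang X (dm X k)" "k' = bang X (dm X k)" using less.prems by (auto intro: bang_uniq)
    thus ?thesis by simp
  next
    case (Suc k0)
    show ?thesis
    proof (cases k0)
      case 0
      then have n: "n = 1" using Suc by simp
      have "cmp X (prj X A n 1) k = cmp X (prj X A n 1) k'" using less.prems(4)[of 1] n by simp
      thus ?thesis using n less.prems by simp
    next
      case (Suc k1)
      have n: "n = Suc (Suc k1)" using Suc \<open>n = Suc k0\<close> by simp
      have c: "cd X k = prd X A (pw X A (Suc k1))" "cd X k' = prd X A (pw X A (Suc k1))"
        using less.prems n by auto
      have 1: "cmp X (pr1 X A (pw X A (Suc k1))) k = cmp X (pr1 X A (pw X A (Suc k1))) k'"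
        using less.prems(4)[of 1] n by simp
      have 2: "cmp X (pr2 X A (pw X A (Suc k1))) k = cmp X (pr2 X A (pw X A (Suc k1))) k'"
      proof (rule less.IH[of "Suc k1"])
        fix i assume i: "1 \<le> i" "i \<le> Suc k1"
        have "cmp X (prj X A n (Suc i)) k = cmp X (prj X A n (Suc i)) k'" using i n by (intro less.prems(4)) auto
        then show "cmp X (prj X A (Suc k1) i) (cmp X (pr2 X A (pw X A (Suc k1))) k) =
              cmp X (prj X A (Suc k1) i) (cmp X (pr2 X A (pw X A (Suc k1))) k')"
          using i n c by simp
      qed (use n c less.prems in auto)
      show ?thesis by (rule pair_ext[OF c 1 2])
    qed
  qed
qed

lemma tupm_ty: "(\<And>i. 1 \<le> i \<Longrightarrow> i \<le> k \<Longrightarrow> dm X (g i) = D \<and> cd X (g i) = A) \<Longrightarrow>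
   dm X (tup X D (map g [1..<k+1])) = D \<and> cd X (tup X D (map g [1..<k+1])) = pw X A k"
  by (intro conjI dm_tup cd_tup) auto

lemma prj_tupm: "(\<And>i. 1 \<le> i \<Longrightarrow> i \<le> k \<Longrightarrow> dm X (g i) = D \<and> cd X (g i) = A) \<Longrightarrow> 1 \<le> l \<Longrightarrow> l \<le> k \<Longrightarrow>
   cmp X (prj X A k l) (tup X D (map g [1..<k+1])) = g l"
proof -
  assume a: "\<And>i. 1 \<le> i \<Longrightarrow> i \<le> k \<Longrightarrow> dm X (g i) = D \<and> cd X (g i) = A" "1 \<le> l" "l \<le> k"
  have "cmp X (prj X A k l) (tup X D (map g [1..<k+1])) = (map g [1..<k+1]) ! (l - 1)"
    using a by (intro prj_tup) auto
  also have "\<dots> = g l" using a by (simp add: nth_map del: upt_Suc)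
  finally show ?thesis .
qed

lemma prj_tupm2: "(\<And>i. 1 \<le> i \<Longrightarrow> i \<le> k \<Longrightarrow> dm X (g i) = D \<and> cd X (g i) = A) \<Longrightarrow> 1 \<le> l \<Longrightarrow> l \<le> k \<Longrightarrow>
   cd X h = D \<Longrightarrow> cmp X (prj X A k l) (cmp X (tup X D (map g [1..<k+1])) h) = cmp X (g l) h"
proof -
  assume a: "\<And>i. 1 \<le> i \<Longrightarrow> i \<le> k \<Longrightarrow> dm X (g i) = D \<and> cd X (g i) = A" "1 \<le> l" "l \<le> k" "cd X h = D"
  have t: "dm X (tup X D (map g [1..<k+1])) = D \<and> cd X (tup X D (map g [1..<k+1])) = pw X A k"
    using a(1) by (rule tupm_ty)
  have "cmp X (prj X A k l) (cmp X (tup X D (map g [1..<k+1])) h) =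
     cmp X (cmp X (prj X A k l) (tup X D (map g [1..<k+1]))) h" using t a by (subst assoc) auto
  then show ?thesis using prj_tupm[OF a(1-3)] by simp
qed

lemma diag_ty[simp]: "dm X (diag X A k) = A" "cd X (diag X A k) = pw X A k"
proof -
  have e: "diag X A k = tup X A (map (\<lambda>_. idm X A) [1..<k+1])" by (simp add: diag_def map_replicate_const del: upt_Suc)
  show "dm X (diag X A k) = A" "cd X (diag X A k) = pw X A k" unfolding e using tupm_ty[of k "\<lambda>_. idm X A" A A] by auto
qed
lemma prj_diag[simp]: "1 \<le> l \<Longrightarrow> l \<le> k \<Longrightarrow> cmp X (prj X A k l) (diag X A k) = idm X A"
proof -
  have e: "diag X A k = tup X A (map (\<lambda>_. idm X A) [1..<k+1])" by (simp add: diag_def map_replicate_const del: upt_Suc)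
  assume "1 \<le> l" "l \<le> k" thus ?thesis unfolding e by (intro prj_tupm) auto
qed


lemma comp2: "cmp X a b = c \<Longrightarrow> cd X b = dm X a \<Longrightarrow> cd X k = dm X b \<Longrightarrow> cmp X a (cmp X b k) = cmp X c k"
  by (metis assoc)

end



context cc begin

context fixes n m :: nat and \<delta> :: "nat \<Rightarrow> nat \<Rightarrow> nat" assumes aut: "automaton n m \<delta>"
begin

lemma drng: "1 \<le> i \<Longrightarrow> i \<le> n \<Longrightarrow> 1 \<le> j \<Longrightarrow> j \<le> m \<Longrightarrow> 1 \<le> \<delta> i j \<and> \<delta> i j \<le> n"
  using aut unfolding automaton_def by auto

lemma rho_ty[simp]: "1 \<le> i \<Longrightarrow> i \<le> n \<Longrightarrow> dm X (rho X n m \<delta> A i) = pw X A n"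
   "1 \<le> i \<Longrightarrow> i \<le> n \<Longrightarrow> cd X (rho X n m \<delta> A i) = pw X A m"
  unfolding rho_def using tupm_ty[of m "\<lambda>j. prj X A n (\<delta> i j)" "pw X A n" A] drng by auto

lemma prj_rho[simp]: "1 \<le> i \<Longrightarrow> i \<le> n \<Longrightarrow> 1 \<le> l \<Longrightarrow> l \<le> m \<Longrightarrow>
   cmp X (prj X A m l) (rho X n m \<delta> A i) = prj X A n (\<delta> i l)"
  unfolding rho_def using drng by (intro prj_tupm) auto

lemma fQ_ty[simp]: "dm X f = prd X (pw X A m) C \<Longrightarrow> cd X f = A \<Longrightarrow> dm X (fQ X n m \<delta> A C f) = prd X (pw X A n) C"
   "dm X f = prd X (pw X A m) C \<Longrightarrow> cd X f = A \<Longrightarrow> cd X (fQ X n m \<delta> A C f) = pw X A n"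
  unfolding fQ_def using tupm_ty[of n "\<lambda>i. cmp X f (cross X (rho X n m \<delta> A i) (idm X C))" "prd X (pw X A n) C" A]
  by auto

lemma prj_rho2[simp]: "1 \<le> i \<Longrightarrow> i \<le> n \<Longrightarrow> 1 \<le> l \<Longrightarrow> l \<le> m \<Longrightarrow> cd X k = pw X A n \<Longrightarrow>
   cmp X (prj X A m l) (cmp X (rho X n m \<delta> A i) k) = cmp X (prj X A n (\<delta> i l)) k"
  by (rule comp2) auto

lemma prj_fQ[simp]: "dm X f = prd X (pw X A m) C \<Longrightarrow> cd X f = A \<Longrightarrow> 1 \<le> i \<Longrightarrow> i \<le> n \<Longrightarrow>
   cmp X (prj X A n i) (fQ X n m \<delta> A C f) = cmp X f (cross X (rho X n m \<delta> A i) (idm X C))"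
  unfolding fQ_def by (intro prj_tupm) auto


lemma step:
  assumes G: "Gamma_at X n m \<delta> q" and q: "1 \<le> q" "q \<le> n" and j: "1 \<le> j" "j \<le> m"
  shows "Gamma_at X n m \<delta> (\<delta> q j)"
  unfolding Gamma_at_def
proof (intro allI impI)
  fix A C f assume "f \<in> hom X (prd X (pw X A m) C) A"
  hence fd[simp]: "dm X f = prd X (pw X A m) C" "cd X f = A" by (auto simp: hom_def)
  define A' where "A' = prd X A A"
  define P where "P k = tup X (pw X A' k) (map (\<lambda>i. cmp X (pr1 X A A) (prj X A' k i)) [1..<k+1])" for k
  have P_ty[simp]: "dm X (P k) = pw X A' k" "cd X (P k) = pw X A k" for k
    unfolding P_def using tupm_ty[of k "\<lambda>i. cmp X (pr1 X A A) (prj X A' k i)" "pw X A' k" A] by (auto simp: A'_def)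
  have prj_P[simp]: "1 \<le> l \<Longrightarrow> l \<le> k \<Longrightarrow> cmp X (prj X A k l) (P k) = cmp X (pr1 X A A) (prj X A' k l)" for l k
    unfolding P_def by (intro prj_tupm) (auto simp: A'_def)
  define h where "h = pair X (cmp X f (cross X (P m) (idm X C))) (cmp X (prj X A m j) (cmp X (P m) (pr1 X (pw X A' m) C)))"
  have h_ty[simp]: "dm X h = prd X (pw X A' m) C" "cd X h = A'" unfolding h_def using j by (auto simp: A'_def cross_def)
  have Gh: "cmp X (prj X A' n q) (dag X (pw X A' n) C (fQ X n m \<delta> A' C h)) = dag X A' C (cmp X h (cross X (diag X A' m) (idm X C)))"
  proof -
    have "h \<in> hom X (prd X (pw X A' m) C) A'" by (simp add: hom_def)
    then show ?thesis using G unfolding Gamma_at_def by blast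
  qed
  define F where "F = fQ X n m \<delta> A C f"
  have F_ty[simp]: "dm X F = prd X (pw X A n) C" "cd X F = pw X A n" unfolding F_def by auto
  define x where "x = dag X (pw X A n) C F"
  have x_ty[simp]: "dm X x = C" "cd X x = pw X A n" unfolding x_def by auto
  define f0 where "f0 = tup X (prd X (pw X A n) C) (map (\<lambda>i. pair X (cmp X f (cross X (rho X n m \<delta> A i) (idm X C))) (cmp X (prj X A n (\<delta> i j)) (pr1 X (pw X A n) C))) [1..<n+1])"
  have f0_ty[simp]: "dm X f0 = prd X (pw X A n) C" "cd X f0 = pw X A' n"
    unfolding f0_def using tupm_ty[of n "\<lambda>i. pair X (cmp X f (cross X (rho X n m \<delta> A i) (idm X C))) (cmp X (prj X A n (\<delta> i j)) (pr1 X (pw X A n) C))" "prd X (pw X A n) C" A'] drng j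
    by (auto simp: A'_def cross_def)
  have prj_f0[simp]: "1 \<le> i \<Longrightarrow> i \<le> n \<Longrightarrow> cmp X (prj X A' n i) f0 = pair X (cmp X f (cross X (rho X n m \<delta> A i) (idm X C))) (cmp X (prj X A n (\<delta> i j)) (pr1 X (pw X A n) C))" for i
    unfolding f0_def using drng j by (intro prj_tupm) (auto simp: A'_def cross_def)
  define g where "g = cmp X (P n) (pr1 X (pw X A' n) C)"
  have g_ty[simp]: "dm X g = prd X (pw X A' n) C" "cd X g = pw X A n" unfolding g_def by auto
  have prj_P2[simp]: "1 \<le> l \<Longrightarrow> l \<le> k \<Longrightarrow> cd X r = pw X A' k \<Longrightarrow> cmp X (prj X A k l) (cmp X (P k) r) = cmp X (pr1 X A A) (cmp X (prj X A' k l) r)" for l k r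
    by (subst comp2[OF prj_P]) (auto simp: A'_def)
  have N: "cmp X (P m) (rho X n m \<delta> A' i) = cmp X (rho X n m \<delta> A i) (P n)" if "1 \<le> i" "i \<le> n" for i
  proof (rule pw_ext[where A=A and n=m])
    fix l assume "1 \<le> l" "l \<le> m"
    then show "cmp X (prj X A m l) (cmp X (P m) (rho X n m \<delta> A' i)) = cmp X (prj X A m l) (cmp X (rho X n m \<delta> A i) (P n))"
      using that drng[of i l] by (auto simp: A'_def)
  qed (use that in auto)
  have N2[simp]: "cmp X (P m) (cmp X (rho X n m \<delta> A' i) r) = cmp X (rho X n m \<delta> A i) (cmp X (P n) r)"
    if "1 \<le> i" "i \<le> n" "cd X r = pw X A' n" for i r
    by (subst comp2[OF N]) (use that in auto)
  have E1: "fQ X n m \<delta> A' C h = cmp X f0 (pair X g (pr2 X (pw X A' n) C))"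
  proof (rule pw_ext[where A=A' and n=n])
    fix i assume i: "1 \<le> i" "i \<le> n"
    show "cmp X (prj X A' n i) (fQ X n m \<delta> A' C h) = cmp X (prj X A' n i) (cmp X f0 (pair X g (pr2 X (pw X A' n) C)))"
      apply (subst comp2[OF prj_f0])
      using i j drng[of i j] apply (auto simp: A'_def[symmetric] h_def cross_def g_def)
      done
  qed auto
  have prj_f02[simp]: "1 \<le> i \<Longrightarrow> i \<le> n \<Longrightarrow> cd X r = prd X (pw X A n) C \<Longrightarrow> cmp X (prj X A' n i) (cmp X f0 r) = cmp X (pair X (cmp X f (cross X (rho X n m \<delta> A i) (idm X C))) (cmp X (prj X A n (\<delta> i j)) (pr1 X (pw X A n) C))) r" for i r
    by (subst comp2[OF prj_f0]) auto
  have E1b: "cmp X g (pair X f0 (pr2 X (pw X A n) C)) = F"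
  proof (rule pw_ext[where A=A and n=n])
    fix i assume i: "1 \<le> i" "i \<le> n"
    show "cmp X (prj X A n i) (cmp X g (pair X f0 (pr2 X (pw X A n) C))) = cmp X (prj X A n i) F"
      using i j drng[of i j] by (auto simp: A'_def[symmetric] cross_def g_def F_def)
  qed auto
  have L: "dag X (pw X A' n) C (fQ X n m \<delta> A' C h) = cmp X f0 (pair X x (idm X C))"
    unfolding E1 using comp_dag[of f0 "pw X A n" C "pw X A' n" g] E1b by (simp add: x_def)
  have xq: "cmp X (prj X A n i) x = cmp X f (pair X (cmp X (rho X n m \<delta> A i) x) (idm X C))" if "1 \<le> i" "i \<le> n" for i
  proof -
    have "cmp X (prj X A n i) x = cmp X (prj X A n i) (cmp X F (pair X x (idm X C)))"
      using fixp[of F "pw X A n" C] by (simp add: x_def)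
    also have "\<dots> = cmp X f (pair X (cmp X (rho X n m \<delta> A i) x) (idm X C))"
      using that unfolding F_def by (subst comp2[OF prj_fQ]) (auto simp: cross_def)
    finally show ?thesis .
  qed
  have LHS: "cmp X (prj X A' n q) (dag X (pw X A' n) C (fQ X n m \<delta> A' C h)) = pair X (cmp X (prj X A n q) x) (cmp X (prj X A n (\<delta> q j)) x)"
    unfolding L using q j drng[of q j] xq[of q] by simp
  have prj_diag2[simp]: "1 \<le> l \<Longrightarrow> l \<le> k \<Longrightarrow> cd X r = B \<Longrightarrow> cmp X (prj X B k l) (cmp X (diag X B k) r) = r" for l k r B
    by (subst comp2[OF prj_diag]) auto
  have PD: "cmp X (P m) (diag X A' m) = cmp X (diag X A m) (pr1 X A A)"
  proof (rule pw_ext[where A=A and n=m])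
    fix l assume "1 \<le> l" "l \<le> m"
    then show "cmp X (prj X A m l) (cmp X (P m) (diag X A' m)) = cmp X (prj X A m l) (cmp X (diag X A m) (pr1 X A A))"
      by (simp add: A'_def[symmetric])
  qed (auto simp: A'_def)
  have PD2[simp]: "cd X r = A' \<Longrightarrow> cmp X (P m) (cmp X (diag X A' m) r) = cmp X (diag X A m) (cmp X (pr1 X A A) r)" for r
    by (subst comp2[OF PD]) (auto simp: A'_def)
  define f1 where "f1 = cmp X f (cross X (diag X A m) (idm X C))"
  have f1_ty[simp]: "dm X f1 = prd X A C" "cd X f1 = A" unfolding f1_def by auto
  define s where "s = dag X A C f1"
  have s_ty[simp]: "dm X s = C" "cd X s = A" unfolding s_def by auto
  define f' where "f' = pair X f1 (pr1 X A C)"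
  have f'_ty[simp]: "dm X f' = prd X A C" "cd X f' = A'" unfolding f'_def by (auto simp: A'_def)
  define g' where "g' = cmp X (pr1 X A A) (pr1 X A' C)"
  have g'_ty[simp]: "dm X g' = prd X A' C" "cd X g' = A" unfolding g'_def by (auto simp: A'_def)
  have E2: "cmp X h (cross X (diag X A' m) (idm X C)) = cmp X f' (pair X g' (pr2 X A' C))"
  proof (rule pair_ext[where A=A and B=A])
    show "cmp X (pr1 X A A) (cmp X h (cross X (diag X A' m) (idm X C))) = cmp X (pr1 X A A) (cmp X f' (pair X g' (pr2 X A' C)))"
      using j by (simp add: A'_def[symmetric] h_def f'_def g'_def f1_def cross_def)
    show "cmp X (pr2 X A A) (cmp X h (cross X (diag X A' m) (idm X C))) = cmp X (pr2 X A A) (cmp X f' (pair X g' (pr2 X A' C)))"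
      using j by (simp add: A'_def[symmetric] h_def f'_def g'_def f1_def cross_def)
  qed (auto simp: A'_def)
  have g'f': "cmp X g' (pair X f' (pr2 X A C)) = f1"
    by (simp add: g'_def f'_def A'_def[symmetric])
  have R: "dag X A' C (cmp X h (cross X (diag X A' m) (idm X C))) = pair X s s"
  proof -
    have "dag X A' C (cmp X h (cross X (diag X A' m) (idm X C))) = cmp X f' (pair X s (idm X C))"
      unfolding E2 using comp_dag[of f' A C A' g'] g'f' by (simp add: s_def)
    also have "\<dots> = pair X s s" using fixp[of f1 A C] by (simp add: f'_def s_def[symmetric])
    finally show ?thesis .
  qed
  have "pair X (cmp X (prj X A n q) x) (cmp X (prj X A n (\<delta> q j)) x) = pair X s s"
    using Gh LHS R by simp
  then have "cmp X (pr2 X A A) (pair X (cmp X (prj X A n q) x) (cmp X (prj X A n (\<delta> q j)) x)) = cmp X (pr2 X A A) (pair X s s)"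
    by simp
  then have "cmp X (prj X A n (\<delta> q j)) x = s" using q j drng[of q j] by simp
  then show "cmp X (prj X A n (\<delta> q j)) (dag X (pw X A n) C (fQ X n m \<delta> A C f)) =
         dag X A C (cmp X f (cross X (diag X A m) (idm X C)))"
    by (simp add: x_def F_def s_def f1_def)
qed


lemma run_step: "Gamma_at X n m \<delta> q \<Longrightarrow> q \<in> {1..n} \<Longrightarrow> u \<in> lists {1..m} \<Longrightarrow>
   Gamma_at X n m \<delta> (run \<delta> q u) \<and> run \<delta> q u \<in> {1..n}"
proof (induction u arbitrary: q)
  case Nil thus ?case by (simp add: run_def)
next
  case (Cons a u)
  have "Gamma_at X n m \<delta> (\<delta> q a)" "\<delta> q a \<in> {1..n}" using Cons.prems step drng[of q a] by auto
  thus ?case using Cons.IH[of "\<delta> q a"] Cons.prems by (simp add: run_def)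
qed

lemma prj_diag_c: "1 \<le> l \<Longrightarrow> l \<le> k \<Longrightarrow> cd X r = B \<Longrightarrow> cmp X (prj X B k l) (cmp X (diag X B k) r) = r"
  by (subst comp2[OF prj_diag]) auto

lemma G_at: "Gamma X n m \<delta> \<Longrightarrow> q \<in> {1..n} \<Longrightarrow> Gamma_at X n m \<delta> q"
  unfolding Gamma_def Gamma_at_def
proof (intro allI impI)
  fix A C f assume G: "\<forall>A C f. f \<in> hom X (prd X (pw X A m) C) A \<longrightarrow>
         dag X (pw X A n) C (fQ X n m \<delta> A C f) = cmp X (diag X A n) (dag X A C (cmp X f (cross X (diag X A m) (idm X C))))"
    and q: "q \<in> {1..n}" and f: "f \<in> hom X (prd X (pw X A m) C) A"
  have fd[simp]: "dm X f = prd X (pw X A m) C" "cd X f = A" using f by (auto simp: hom_def)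
  show "cmp X (prj X A n q) (dag X (pw X A n) C (fQ X n m \<delta> A C f)) = dag X A C (cmp X f (cross X (diag X A m) (idm X C)))"
    using G f q by (simp add: prj_diag_c)
qed

lemma at_G: "(\<And>p. p \<in> {1..n} \<Longrightarrow> Gamma_at X n m \<delta> p) \<Longrightarrow> Gamma X n m \<delta>"
  unfolding Gamma_def
proof (intro allI impI)
  fix A C f assume G: "\<And>p. p \<in> {1..n} \<Longrightarrow> Gamma_at X n m \<delta> p" and f: "f \<in> hom X (prd X (pw X A m) C) A"
  have fd[simp]: "dm X f = prd X (pw X A m) C" "cd X f = A" using f by (auto simp: hom_def)
  show "dag X (pw X A n) C (fQ X n m \<delta> A C f) = cmp X (diag X A n) (dag X A C (cmp X f (cross X (diag X A m) (idm X C))))"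
  proof (rule pw_ext[where A=A and n=n])
    fix i assume i: "1 \<le> i" "i \<le> n"
    have "cmp X (prj X A n i) (dag X (pw X A n) C (fQ X n m \<delta> A C f)) = dag X A C (cmp X f (cross X (diag X A m) (idm X C)))"
      using G[of i] i f unfolding Gamma_at_def by auto
    then show "cmp X (prj X A n i) (dag X (pw X A n) C (fQ X n m \<delta> A C f)) =
         cmp X (prj X A n i) (cmp X (diag X A n) (dag X A C (cmp X f (cross X (diag X A m) (idm X C)))))"
      using i by (simp add: prj_diag_c)
  qed auto
qed

end
end

theorem corollary4p4:
  fixes X :: "('o, 'm) cstruct" and n m :: nat and \<delta> :: "nat \<Rightarrow> nat \<Rightarrow> nat"
    and q :: nat and u :: "nat list"
  assumes "conway X" and "automaton n m \<delta>" and "q \<in> {1..n}" and "u \<in> lists {1..m}"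
  shows "(Gamma_at X n m \<delta> q \<longrightarrow> Gamma_at X n m \<delta> (run \<delta> q u)) \<and>
         (initially_connected n m \<delta> q \<longrightarrow> (Gamma X n m \<delta> \<longleftrightarrow> Gamma_at X n m \<delta> q))"
proof -
  interpret cc X by (unfold_locales) (rule assms(1))
  have A: "Gamma_at X n m \<delta> q \<longrightarrow> Gamma_at X n m \<delta> (run \<delta> q u)"
    using run_step[OF assms(2)] assms(3,4) by blast
  have B: "initially_connected n m \<delta> q \<longrightarrow> (Gamma X n m \<delta> \<longleftrightarrow> Gamma_at X n m \<delta> q)"
  proof (intro impI iffI)
    assume "Gamma X n m \<delta>" thus "Gamma_at X n m \<delta> q" using G_at[OF assms(2)] assms(3) by blast
  next
    assume ic: "initially_connected n m \<delta> q" and g: "Gamma_at X n m \<delta> q"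
    show "Gamma X n m \<delta>"
    proof (rule at_G[OF assms(2)])
      fix p assume "p \<in> {1..n}"
      then obtain v where v: "v \<in> lists {1..m}" "run \<delta> q v = p" using ic unfolding initially_connected_def by blast
      show "Gamma_at X n m \<delta> p" using run_step[OF assms(2) g assms(3) v(1)] v(2) by simp
    qed
  qed
  show ?thesis using A B by blast
qed


end
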